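(* Let $N_1,N_2\geqslant 1$ be real numbers and let $\alpha,\beta$ be real numbers with $0<\alpha,\beta\leqslant 1$. Define $$T(N_1,N_2,\alpha,\beta)=\sum_{\substack{n_1\sim N_1,\ n_2\sim N_2\\ n_1\neq n_2}}\frac{1}{|n_1^{\alpha}-n_2^{\alpha}|^{\beta}},$$ where $n_1,n_2$ range over integers. Then $$T(N_1,N_2,\alpha,\beta)\ll (N_1N_2)^{1-\alpha\beta/2}\log N_1\log N_2.$$
   Context: The notation $n\sim N$ means $N<n\leqslant 2N$. *)

theory Defs
  imports Complex_Main
begin

definition dyadic :: "real \<Rightarrow> int set" where
  "dyadic N = {n::int. N < real_of_int n \<and> real_of_int n \<le> 2 * N}"

definition T :: "real \<Rightarrow> real \<Rightarrow> real \<Rightarrow> real \<Rightarrow> real" where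
  "T N1 N2 \<alpha> \<beta> =
     (\<Sum>(n1, n2) \<in> {(n1, n2). n1 \<in> dyadic N1 \<and> n2 \<in> dyadic N2 \<and> n1 \<noteq> n2}.
        1 / (\<bar>real_of_int n1 powr \<alpha> - real_of_int n2 powr \<alpha>\<bar> powr \<beta>))"

end

theory Submission
  imports Defs "HOL-Analysis.Harmonic_Numbers"
begin

lemma pair_bound:
  fixes x y B a b :: real
  assumes a: "0 < a" "a \<le> 1" and b: "0 < b" "b \<le> 1" and xy: "0 < y" "y < x" "x \<le> B"
  shows "1 / (x powr a - y powr a) powr b \<le> B powr (1 - a*b) / (a * (x - y))"
proof -
  have "\<exists>z. y < z \<and> z < x \<and> x powr a - y powr a = (x - y) * (a * z powr (a - 1))"
    by (rule MVT2) (use xy in \<open>auto intro!: has_real_derivative_powr\<close>)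
  then obtain z where z: "y < z" "z < x" "x powr a - y powr a = (x - y) * (a * z powr (a - 1))" by blast
  define d where "d = x powr a - y powr a"
  have Bpos: "B > 0" using xy by linarith
  have zB: "B powr (a - 1) \<le> z powr (a - 1)"
    by (rule powr_mono2') (use a z xy in auto)
  have dlow: "d \<ge> (x - y) * (a * B powr (a - 1))"
    unfolding d_def z(3) using zB a xy by (intro mult_left_mono) auto
  have lpos: "(x - y) * (a * B powr (a - 1)) > 0" using a xy Bpos by simp
  have dpos: "d > 0" using dlow lpos by linarith
  have dup: "d \<le> B powr a"
  proof -
    have "d \<le> x powr a" unfolding d_def by simp
    also have "\<dots> \<le> B powr a" using xy a by (intro powr_mono2) auto
    finally show ?thesis .
  qed
  have e1: "1 / d powr b = d powr (1 - b) / d"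
    using dpos by (simp add: powr_diff)
  have e2: "d powr (1 - b) \<le> B powr (a * (1 - b))"
  proof -
    have "d powr (1 - b) \<le> (B powr a) powr (1 - b)"
      using dpos dup b by (intro powr_mono2) auto
    also have "\<dots> = B powr (a * (1 - b))" by (simp add: powr_powr)
    finally show ?thesis .
  qed
  have "d powr (1 - b) / d \<le> B powr (a * (1 - b)) / ((x - y) * (a * B powr (a - 1)))"
    using e2 dlow lpos dpos by (intro frac_le) auto
  also have "\<dots> = (B powr (a * (1 - b)) / B powr (a - 1)) / (a * (x - y))"
    by (simp add: divide_divide_eq_left mult_ac)
  also have "B powr (a * (1 - b)) / B powr (a - 1) = B powr (a * (1 - b) - (a - 1))"
    by (rule powr_diff[symmetric])
  also have "a * (1 - b) - (a - 1) = 1 - a * b" by (simp add: algebra_simps)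
  finally show ?thesis using e1 unfolding d_def by simp
qed

lemma pair_bound_abs:
  fixes x y B a b :: real
  assumes a: "0 < a" "a \<le> 1" and b: "0 < b" "b \<le> 1"
    and xy: "0 < x" "0 < y" "x \<noteq> y" "x \<le> B" "y \<le> B"
  shows "1 / \<bar>x powr a - y powr a\<bar> powr b \<le> B powr (1 - a*b) / (a * \<bar>x - y\<bar>)"
proof (cases "y < x")
  case True
  have "x powr a - y powr a > 0" using True xy a by (simp add: powr_less_mono2)
  then show ?thesis using pair_bound[OF a b xy(2) True xy(4)] True by simp
next
  case False
  then have yx: "x < y" using xy by linarith
  have "y powr a - x powr a > 0" using yx xy a by (simp add: powr_less_mono2)
  then show ?thesis using pair_bound[OF a b xy(1) yx xy(5)] yx by (simp add: abs_minus_commute)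
qed

lemma dyadic_sub: "dyadic N \<subseteq> {\<lfloor>N\<rfloor> + 1 .. \<lfloor>2 * N\<rfloor>}"
proof
  fix n assume "n \<in> dyadic N"
  then have h: "N < real_of_int n" "real_of_int n \<le> 2 * N" by (auto simp: dyadic_def)
  have "\<lfloor>N\<rfloor> < n" using h(1) by linarith
  moreover have "n \<le> \<lfloor>2 * N\<rfloor>" using h(2) by linarith
  ultimately show "n \<in> {\<lfloor>N\<rfloor> + 1 .. \<lfloor>2 * N\<rfloor>}" by simp
qed

lemma dyadic_finite: "finite (dyadic N)"
  using dyadic_sub finite_subset by blast

lemma dyadic_card:
  assumes "N \<ge> 1"
  shows "real (card (dyadic N)) \<le> 2 * N"
proof -
  have "card (dyadic N) \<le> card {\<lfloor>N\<rfloor> + 1 .. \<lfloor>2 * N\<rfloor>}"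
    by (rule card_mono) (auto simp: dyadic_sub)
  also have "\<dots> = nat (\<lfloor>2 * N\<rfloor> - \<lfloor>N\<rfloor>)" by simp
  finally have "real (card (dyadic N)) \<le> real (nat (\<lfloor>2 * N\<rfloor> - \<lfloor>N\<rfloor>))" by simp
  also have "\<dots> \<le> 2 * N"
  proof -
    have "\<lfloor>2 * N\<rfloor> - \<lfloor>N\<rfloor> \<ge> 0" using assms
      by (smt (verit) floor_mono)
    moreover have "real_of_int (\<lfloor>2 * N\<rfloor> - \<lfloor>N\<rfloor>) \<le> N + 1" by linarith
    ultimately show ?thesis using assms by simp
  qed
  finally show ?thesis .
qed

lemma dyadic_mem:
  assumes "N \<ge> 1" "n \<in> dyadic N"
  shows "1 \<le> n" "real_of_int n \<le> 2 * N" "N < real_of_int n"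
  using assms by (auto simp: dyadic_def)

lemma harm_int: "(\<Sum>j\<in>{1..int K}. 1 / real_of_int j) = harm K"
proof (induction K)
  case 0
  then show ?case by (simp add: harm_def)
next
  case (Suc K)
  have "{1..int (Suc K)} = insert (int K + 1) {1..int K}" by auto
  then show ?case using Suc by (simp add: harm_Suc field_simps)
qed

lemma harm_le_ln: "K \<ge> 1 \<Longrightarrow> harm K \<le> 1 + ln (real K)"
  using euler_mascheroni_sequence_decreasing[of 1 K] by (simp add: harm_def)

lemma harm_int_sub:
  fixes n1 :: int and K :: nat
  assumes "1 \<le> n1" "n1 \<le> int K" "A \<subseteq> {1..int K} - {n1}"
  shows "(\<Sum>n2\<in>A. 1 / \<bar>real_of_int n1 - real_of_int n2\<bar>) \<le> 2 * (1 + ln (real K))"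
proof -
  have K1: "K \<ge> 1" using assms by linarith
  have s0: "(\<Sum>n2\<in>A. 1 / \<bar>real_of_int n1 - real_of_int n2\<bar>)
      \<le> (\<Sum>n2\<in>{1..int K} - {n1}. 1 / \<bar>real_of_int n1 - real_of_int n2\<bar>)"
    by (rule sum_mono2) (use assms in auto)
  have e1: "{1..int K} - {n1} = {1..n1 - 1} \<union> {n1 + 1..int K}" using assms(1,2) by auto
  have e2: "(\<Sum>n2\<in>{1..n1 - 1} \<union> {n1 + 1..int K}. 1 / \<bar>real_of_int n1 - real_of_int n2\<bar>)
     = (\<Sum>n2\<in>{1..n1 - 1}. 1 / \<bar>real_of_int n1 - real_of_int n2\<bar>)
       + (\<Sum>n2\<in>{n1 + 1..int K}. 1 / \<bar>real_of_int n1 - real_of_int n2\<bar>)"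
    by (rule sum.union_disjoint) auto
  have "(\<Sum>n2\<in>{1..n1 - 1}. 1 / \<bar>real_of_int n1 - real_of_int n2\<bar>)
      = (\<Sum>j\<in>{1..n1 - 1}. 1 / real_of_int j)"
    by (rule sum.reindex_bij_witness[of _ "\<lambda>j. n1 - j" "\<lambda>j. n1 - j"]) auto
  also have "\<dots> \<le> (\<Sum>j\<in>{1..int K}. 1 / real_of_int j)"
    by (rule sum_mono2) (use assms in auto)
  finally have s1: "(\<Sum>n2\<in>{1..n1 - 1}. 1 / \<bar>real_of_int n1 - real_of_int n2\<bar>) \<le> harm K"
    using harm_int[of K] by simp
  have "(\<Sum>n2\<in>{n1 + 1..int K}. 1 / \<bar>real_of_int n1 - real_of_int n2\<bar>)
      = (\<Sum>j\<in>{1..int K - n1}. 1 / real_of_int j)"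
    by (rule sum.reindex_bij_witness[of _ "\<lambda>j. j + n1" "\<lambda>j. j - n1"]) auto
  also have "\<dots> \<le> (\<Sum>j\<in>{1..int K}. 1 / real_of_int j)"
    by (rule sum_mono2) (use assms in auto)
  finally have s2: "(\<Sum>n2\<in>{n1 + 1..int K}. 1 / \<bar>real_of_int n1 - real_of_int n2\<bar>) \<le> harm K"
    using harm_int[of K] by simp
  have "(\<Sum>n2\<in>A. 1 / \<bar>real_of_int n1 - real_of_int n2\<bar>) \<le> 2 * harm K"
    using s0 s1 s2 unfolding e1 e2 by linarith
  moreover note harm_le_ln[OF K1]
  ultimately show ?thesis by (meson order_trans mult_left_mono zero_le_numeral)
qed

theorem lemma2p11:
  fixes \<alpha> \<beta> :: real
  assumes "0 < \<alpha>" "\<alpha> \<le> 1" "0 < \<beta>" "\<beta> \<le> 1"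
  shows "\<exists>C>0. \<forall>N1 N2 :: real. N1 \<ge> 1 \<longrightarrow> N2 \<ge> 1 \<longrightarrow>
           T N1 N2 \<alpha> \<beta> \<le> C * (N1 * N2) powr (1 - \<alpha> * \<beta> / 2) * ln (2 * N1) * ln (2 * N2)"
proof -
  note a = assms(1,2) and b = assms(3,4)
  have ab: "0 < \<alpha> * \<beta>" "\<alpha> * \<beta> \<le> 1" using a b by (auto simp: mult_le_one)
  define C where "C = 300 / \<alpha>"
  show ?thesis
  proof (intro exI[of _ C] conjI allI impI)
    show "C > 0" using a by (simp add: C_def)
    fix N1 N2 :: real assume N1: "1 \<le> N1" and N2: "1 \<le> N2"
    define M where "M = max N1 N2"
    define m where "m = min N1 N2"
    define B where "B = 2 * M"
    define E where "E = 1 - \<alpha> * \<beta> / 2"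
    define L1 where "L1 = ln (2 * N1)"
    define L2 where "L2 = ln (2 * N2)"
    define D1 where "D1 = dyadic N1"
    define D2 where "D2 = dyadic N2"
    define P where "P = {(n1, n2). n1 \<in> D1 \<and> n2 \<in> D2 \<and> n1 \<noteq> n2}"
    define S where "S = (\<Sum>(n1, n2)\<in>P. 1 / \<bar>real_of_int n1 - real_of_int n2\<bar>)"
    have Mm: "M * m = N1 * N2" unfolding M_def m_def by (simp add: max_def min_def)
    have m1: "m \<ge> 1" "m \<le> M" "M \<ge> 1" using N1 N2 by (auto simp: M_def m_def)
    have B2: "B \<ge> 2" using m1 by (simp add: B_def)
    have L: "L1 \<ge> 2/3" "L2 \<ge> 2/3"
    proof -
      have "ln (2::real) \<le> L1" unfolding L1_def using N1 by simp
      moreover have "ln (2::real) \<le> L2" unfolding L2_def using N2 by simp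
      ultimately show "L1 \<ge> 2/3" "L2 \<ge> 2/3" using ln2_ge_two_thirds by linarith+
    qed
    have finP: "finite P"
    proof -
      have "P \<subseteq> D1 \<times> D2" by (auto simp: P_def)
      moreover have "finite (D1 \<times> D2)" by (simp add: D1_def D2_def dyadic_finite)
      ultimately show ?thesis by (rule finite_subset)
    qed
    have memP: "1 \<le> n1" "real_of_int n1 \<le> 2 * N1" "N1 < real_of_int n1"
        "1 \<le> n2" "real_of_int n2 \<le> 2 * N2" "N2 < real_of_int n2" "n1 \<noteq> n2"
      if "(n1, n2) \<in> P" for n1 n2
      using that dyadic_mem[OF N1, of n1] dyadic_mem[OF N2, of n2] by (auto simp: P_def D1_def D2_def)
    have cardP: "real (card P) \<le> 4 * N1 * N2"
    proof -
      have "card P \<le> card (D1 \<times> D2)"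
        by (rule card_mono) (auto simp: P_def D1_def D2_def dyadic_finite)
      also have "\<dots> = card D1 * card D2" by (simp add: card_cartesian_product)
      finally have "real (card P) \<le> real (card D1) * real (card D2)"
        by (metis of_nat_le_iff of_nat_mult)
      also have "\<dots> \<le> (2 * N1) * (2 * N2)"
        using dyadic_card[OF N1] dyadic_card[OF N2] unfolding D1_def D2_def
        by (intro mult_mono) auto
      finally show ?thesis by simp
    qed
    have T_le: "T N1 N2 \<alpha> \<beta> \<le> B powr (1 - \<alpha> * \<beta>) / \<alpha> * S"
    proof -
      have "T N1 N2 \<alpha> \<beta> = (\<Sum>(n1, n2)\<in>P. 1 / (\<bar>real_of_int n1 powr \<alpha> - real_of_int n2 powr \<alpha>\<bar> powr \<beta>))"
        unfolding T_def P_def D1_def D2_def by simp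
      also have "\<dots> \<le> (\<Sum>(n1, n2)\<in>P. B powr (1 - \<alpha> * \<beta>) / \<alpha> * (1 / \<bar>real_of_int n1 - real_of_int n2\<bar>))"
      proof (rule sum_mono)
        fix p assume "p \<in> P"
        then obtain n1 n2 where p: "p = (n1, n2)" and pP: "(n1, n2) \<in> P" by (cases p) auto
        have "1 / \<bar>real_of_int n1 powr \<alpha> - real_of_int n2 powr \<alpha>\<bar> powr \<beta>
            \<le> B powr (1 - \<alpha> * \<beta>) / (\<alpha> * \<bar>real_of_int n1 - real_of_int n2\<bar>)"
          using memP[OF pP] m1 by (intro pair_bound_abs[OF a b]) (auto simp: B_def M_def)
        then show "(case p of (n1, n2) \<Rightarrow> 1 / \<bar>real_of_int n1 powr \<alpha> - real_of_int n2 powr \<alpha>\<bar> powr \<beta>)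
            \<le> (case p of (n1, n2) \<Rightarrow> B powr (1 - \<alpha> * \<beta>) / \<alpha> * (1 / \<bar>real_of_int n1 - real_of_int n2\<bar>))"
          by (simp add: p)
      qed
      also have "\<dots> = B powr (1 - \<alpha> * \<beta>) / \<alpha> * S"
        unfolding S_def by (simp add: sum_distrib_left case_prod_beta)
      finally show ?thesis .
    qed
    have Spos: "S \<ge> 0" unfolding S_def by (intro sum_nonneg) auto
    have LL: "L1 * L2 \<ge> 4/9"
    proof -
      have "L1 * L2 \<ge> (2/3) * (2/3)" using L by (intro mult_mono) auto
      then show ?thesis by simp
    qed
    show "T N1 N2 \<alpha> \<beta> \<le> C * (N1 * N2) powr (1 - \<alpha> * \<beta> / 2) * ln (2 * N1) * ln (2 * N2)"
    proof (cases "M > 4 * m")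
      case True
      have S_le: "S \<le> 8 * m"
      proof -
        have "S \<le> (\<Sum>p\<in>P. 2 / M)"
          unfolding S_def
        proof (rule sum_mono)
          fix p assume "p \<in> P"
          then obtain n1 n2 where p: "p = (n1, n2)" and pP: "(n1, n2) \<in> P" by (cases p) auto
          have "\<bar>real_of_int n1 - real_of_int n2\<bar> \<ge> M / 2"
            using memP[OF pP] True unfolding M_def m_def by (auto simp: max_def min_def split: if_splits)
          then have "1 / \<bar>real_of_int n1 - real_of_int n2\<bar> \<le> 1 / (M / 2)"
            using m1 by (intro divide_left_mono) (auto intro!: mult_pos_pos)
          then show "(case p of (n1, n2) \<Rightarrow> 1 / \<bar>real_of_int n1 - real_of_int n2\<bar>) \<le> 2 / M"
            by (simp add: p)
        qed
        also have "\<dots> = real (card P) * (2 / M)" by simp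
        also have "\<dots> \<le> (4 * N1 * N2) * (2 / M)"
          using cardP m1 by (intro mult_right_mono) auto
        also have "\<dots> = 8 * m" using Mm m1 by (simp add: field_simps)
        finally show ?thesis .
      qed
      have pw: "M powr (1 - \<alpha> * \<beta>) * m \<le> (N1 * N2) powr E"
      proof -
        have "M powr (1 - \<alpha> * \<beta>) * m = (M powr E * m powr E) * (m powr (\<alpha> * \<beta> / 2) / M powr (\<alpha> * \<beta> / 2))"
        proof -
          have "E = (1 - \<alpha> * \<beta>) + \<alpha> * \<beta> / 2" unfolding E_def by simp
          then have e1: "M powr E = M powr (1 - \<alpha> * \<beta>) * M powr (\<alpha> * \<beta> / 2)"
            by (metis powr_add)
          have "m powr E * m powr (\<alpha> * \<beta> / 2) = m powr (E + \<alpha> * \<beta> / 2)"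
            by (simp add: powr_add)
          also have "E + \<alpha> * \<beta> / 2 = 1" unfolding E_def by simp
          finally have e2: "m powr E * m powr (\<alpha> * \<beta> / 2) = m" using m1 by simp
          have t: "M powr (\<alpha> * \<beta> / 2) > 0" using m1 by simp
          have gen: "\<And>p r s t::real. t > 0 \<Longrightarrow> (p * t * r) * (s / t) = p * (r * s)"
            by (simp add: field_simps)
          show ?thesis unfolding e1 gen[OF t] e2 ..
        qed
        also have "\<dots> \<le> (M powr E * m powr E) * 1"
          using m1 ab by (intro mult_left_mono) (auto intro!: powr_mono2)
        also have "\<dots> = (N1 * N2) powr E"
          by (subst Mm[symmetric]) (use m1 in \<open>simp add: powr_mult\<close>)
        finally show ?thesis .
      qed
      have "T N1 N2 \<alpha> \<beta> \<le> B powr (1 - \<alpha> * \<beta>) / \<alpha> * (8 * m)"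
        using T_le S_le a by (smt (verit) divide_nonneg_pos mult_left_mono powr_ge_zero)
      also have "B powr (1 - \<alpha> * \<beta>) = 2 powr (1 - \<alpha> * \<beta>) * M powr (1 - \<alpha> * \<beta>)"
        unfolding B_def using m1 by (simp add: powr_mult)
      also have "2 powr (1 - \<alpha> * \<beta>) \<le> (2::real)"
        using ab powr_mono[of "1 - \<alpha> * \<beta>" 1 "2::real"] by simp
      hence "2 powr (1 - \<alpha> * \<beta>) * M powr (1 - \<alpha> * \<beta>) / \<alpha> * (8 * m) \<le> 2 * M powr (1 - \<alpha> * \<beta>) / \<alpha> * (8 * m)"
        using a m1 by (intro mult_right_mono divide_right_mono) auto
      also have "\<dots> = 16 / \<alpha> * (M powr (1 - \<alpha> * \<beta>) * m)" by (simp add: field_simps)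
      also have "\<dots> \<le> 16 / \<alpha> * (N1 * N2) powr E" using pw a by (intro mult_left_mono) auto
      also have "\<dots> \<le> 16 / \<alpha> * (N1 * N2) powr E * ((9/4) * (L1 * L2))"
      proof -
        have "0 \<le> 16 / \<alpha> * (N1 * N2) powr E" using a by simp
        moreover have "1 \<le> (9/4) * (L1 * L2)" using LL by linarith
        moreover have "\<And>x y::real. 0 \<le> x \<Longrightarrow> 1 \<le> y \<Longrightarrow> x \<le> x * y"
          by (metis mult_left_mono mult_1_right)
        ultimately show ?thesis by blast
      qed
      also have "\<dots> \<le> C * (N1 * N2) powr E * L1 * L2"
      proof -
        have nn: "0 \<le> L1 * L2 * (N1 * N2) powr E" using L by simp
        have "\<And>k::real. k \<le> 300 \<Longrightarrow> k / \<alpha> * (L1 * L2 * (N1 * N2) powr E) \<le> 300 / \<alpha> * (L1 * L2 * (N1 * N2) powr E)"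
          using nn a by (intro mult_right_mono divide_right_mono) auto
        from this[of 36] show ?thesis unfolding C_def by (simp add: field_simps)
      qed
      finally show ?thesis unfolding E_def L1_def L2_def .
    next
      case False
      define K where "K = nat \<lfloor>B\<rfloor>"
      have KB: "real K \<le> B" "1 \<le> K" using B2 unfolding K_def by linarith+
      have S_le: "S \<le> 2 * N1 * (2 * (1 + ln B))"
      proof -
        have "S = (\<Sum>n1\<in>D1. \<Sum>n2\<in>D2 - {n1}. 1 / \<bar>real_of_int n1 - real_of_int n2\<bar>)"
        proof -
          have "P = Sigma D1 (\<lambda>n1. D2 - {n1})" by (auto simp: P_def)
          then show ?thesis unfolding S_def
            by (simp add: sum.Sigma D1_def D2_def dyadic_finite)
        qed
        also have "\<dots> \<le> (\<Sum>n1\<in>D1. 2 * (1 + ln (real K)))"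
        proof (rule sum_mono)
          fix n1 assume n1: "n1 \<in> D1"
          have h1: "1 \<le> n1" "real_of_int n1 \<le> 2 * N1" using dyadic_mem[OF N1] n1 D1_def by auto
          have "n1 \<le> int K" using h1 m1 unfolding K_def B_def M_def by linarith
          moreover have "D2 - {n1} \<subseteq> {1..int K} - {n1}"
          proof
            fix n2 assume "n2 \<in> D2 - {n1}"
            then have "1 \<le> n2" "real_of_int n2 \<le> 2 * N2" "n2 \<noteq> n1"
              using dyadic_mem[OF N2] D2_def by auto
            then show "n2 \<in> {1..int K} - {n1}" using m1 unfolding K_def B_def M_def by auto linarith
          qed
          ultimately show "(\<Sum>n2\<in>D2 - {n1}. 1 / \<bar>real_of_int n1 - real_of_int n2\<bar>) \<le> 2 * (1 + ln (real K))"
            using h1 by (intro harm_int_sub) auto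
        qed
        also have "\<dots> = real (card D1) * (2 * (1 + ln (real K)))" by simp
        also have "\<dots> \<le> 2 * N1 * (2 * (1 + ln B))"
        proof (rule mult_mono)
          show "real (card D1) \<le> 2 * N1" using dyadic_card[OF N1] D1_def by simp
          show "2 * (1 + ln (real K)) \<le> 2 * (1 + ln B)" using KB by simp
          show "0 \<le> 2 * N1" using N1 by simp
          show "0 \<le> 2 * (1 + ln (real K))" using KB by simp
        qed
        finally show ?thesis .
      qed
      have lnB: "1 + ln B \<le> 9 * L1 * L2"
      proof -
        have "B \<le> 4 * (2 * N1)" using False m1 unfolding B_def M_def m_def by (auto simp: max_def min_def)
        then have "ln B \<le> ln (4 * (2 * N1))" using B2 by simp
        also have "\<dots> = ln 4 + L1" unfolding L1_def using N1 by (intro ln_mult_pos) auto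
        finally have l4: "ln B \<le> ln 4 + L1" .
        have "ln (4::real) = 2 * ln 2" using ln_realpow[of 2 2] by simp
        then have "1 + ln B \<le> 1 + 2 * ln 2 + L1" using l4 by linarith
        moreover have "ln (2::real) \<le> 1" using ln2_le_25_over_36 by simp
        moreover have "L1 * L2 \<ge> L1 * (2/3)" using L by (intro mult_left_mono) auto
        ultimately show ?thesis using L by linarith
      qed
      have pw: "B powr (1 - \<alpha> * \<beta>) * B \<le> 16 * (N1 * N2) powr E"
      proof -
        have "B powr (1 - \<alpha> * \<beta>) * B = (B ^ 2) powr E"
        proof -
          have Bp: "B > 0" using B2 by simp
          have "B powr (1 - \<alpha> * \<beta>) * B = B powr (1 - \<alpha> * \<beta>) * B powr 1" using Bp by simp
          also have "\<dots> = B powr ((1 - \<alpha> * \<beta>) + 1)" by (rule powr_add[symmetric])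
          also have "(1 - \<alpha> * \<beta>) + 1 = 2 * E" unfolding E_def by simp
          also have "B powr (2 * E) = (B powr 2) powr E" by (simp add: powr_powr)
          also have "B powr 2 = B ^ 2" using Bp by simp
          finally show ?thesis .
        qed
        also have "\<dots> \<le> (16 * (N1 * N2)) powr E"
        proof (rule powr_mono2)
          show "0 \<le> E" using ab unfolding E_def by simp
          show "0 \<le> B ^ 2" by simp
          have "M * M \<le> M * (4 * m)" using False m1 by (intro mult_left_mono) auto
          then show "B ^ 2 \<le> 16 * (N1 * N2)" unfolding B_def using Mm by (simp add: power2_eq_square)
        qed
        also have "\<dots> = 16 powr E * (N1 * N2) powr E" using N1 N2 by (simp add: powr_mult)
        also have "\<dots> \<le> 16 * (N1 * N2) powr E"
        proof (rule mult_right_mono)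
          show "16 powr E \<le> (16::real)" using ab powr_mono[of E 1 "16::real"] unfolding E_def by simp
        qed simp
        finally show ?thesis .
      qed
      have "T N1 N2 \<alpha> \<beta> \<le> B powr (1 - \<alpha> * \<beta>) / \<alpha> * (2 * N1 * (2 * (1 + ln B)))"
        using T_le S_le a by (smt (verit) divide_nonneg_pos mult_left_mono powr_ge_zero)
      also have "\<dots> \<le> B powr (1 - \<alpha> * \<beta>) / \<alpha> * (B * (2 * (1 + ln B)))"
        using a B2 m1 unfolding B_def M_def by (intro mult_left_mono mult_right_mono) auto
      also have "\<dots> = 2 / \<alpha> * (B powr (1 - \<alpha> * \<beta>) * B) * (1 + ln B)" by (simp add: field_simps)
      also have "\<dots> \<le> 2 / \<alpha> * (16 * (N1 * N2) powr E) * (9 * L1 * L2)"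
      proof (rule mult_mono)
        show "2 / \<alpha> * (B powr (1 - \<alpha> * \<beta>) * B) \<le> 2 / \<alpha> * (16 * (N1 * N2) powr E)"
          using pw a by (intro mult_left_mono) auto
        show "1 + ln B \<le> 9 * L1 * L2" by (rule lnB)
        show "0 \<le> 2 / \<alpha> * (16 * (N1 * N2) powr E)" using a by simp
        show "0 \<le> 1 + ln B" using B2 ln_ge_zero[of B] by simp
      qed
      also have "\<dots> \<le> C * (N1 * N2) powr E * L1 * L2"
      proof -
        have nn: "0 \<le> L1 * L2 * (N1 * N2) powr E" using L by simp
        have "\<And>k::real. k \<le> 300 \<Longrightarrow> k / \<alpha> * (L1 * L2 * (N1 * N2) powr E) \<le> 300 / \<alpha> * (L1 * L2 * (N1 * N2) powr E)"
          using nn a by (intro mult_right_mono divide_right_mono) auto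
        from this[of 288] show ?thesis unfolding C_def by (simp add: field_simps)
      qed
      finally show ?thesis unfolding E_def L1_def L2_def .
    qed
  qed
qed

end
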